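(* Let $G$ be a BK-free graph with $\omega(G)<\Delta(G)$, and suppose $G$ is the line graph of a multigraph $H$. Then $\mu(H)\le 3$. Moreover, no edge of multiplicity $3$ in $H$ lies on a triangle of $H$ (i.e., if $x_1,x_2$ are joined by three parallel edges, there is no vertex $x_3$ adjacent to both $x_1$ and $x_2$).
   Context: Multigraphs are loopless but may have parallel edges; $\mu(H)$ is the maximum multiplicity of an edge of $H$. The line graph of $H$ has vertex set $E(H)$, two vertices adjacent when the corresponding edges share an endpoint. For a graph $G$ and $f:V(G)\to\mathbb{Z}^+$, an orientation $D$ of $E(G)$ is an Alon--Tarsi orientation for $f$ if $d^+_D(v)<f(v)$ for every vertex $v$ and the number of spanning Eulerian subgraphs of $D$ (spanning subdigraphs in which every vertex has equal in- and out-degree) with an even number of edges differs from the number with an odd number of edges; $G$ is $f$-AT if such an orientation exists. A digraph (in which some edges may be oriented in both directions) is kernel-perfect if every induced subdigraph $D'$ has a kernel, i.e., a set $I\subseteq V(D')$ with no arc between two of its vertices such that every vertex of $D'$ not in $I$ has an out-neighbor in $I$. A graph $H$ is $f$-KP if some supergraph $H'$ of $H$ on the same vertex set (possibly with parallel edges) has a kernel-perfect orientation with $d^+(v)<f(v)$ for all $v$. A connected graph $G$ is BK-free if it has no induced subgraph $H$ that is $f_H$-AT or $f_H$-KP, where $f_H(v)=d_H(v)-1+\Delta(G)-d_G(v)$ for $v\in V(H)$. *)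

theory Defs
  imports Main
begin

definition simple_graph :: "'v set \<Rightarrow> ('v \<Rightarrow> 'v \<Rightarrow> bool) \<Rightarrow> bool" where
  "simple_graph V adj \<longleftrightarrow> finite V \<and> (\<forall>u v. adj u v \<longrightarrow> u \<in> V \<and> v \<in> V \<and> u \<noteq> v \<and> adj v u)"

definition connected_graph :: "'v set \<Rightarrow> ('v \<Rightarrow> 'v \<Rightarrow> bool) \<Rightarrow> bool" where
  "connected_graph V adj \<longleftrightarrow> V \<noteq> {} \<and>
     (\<forall>u\<in>V. \<forall>v\<in>V. (u, v) \<in> {(x, y). adj x y}\<^sup>*)"

definition deg_in :: "'v set \<Rightarrow> ('v \<Rightarrow> 'v \<Rightarrow> bool) \<Rightarrow> 'v \<Rightarrow> nat" where
  "deg_in S adj v = card {w \<in> S. adj v w}"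

definition max_degree :: "'v set \<Rightarrow> ('v \<Rightarrow> 'v \<Rightarrow> bool) \<Rightarrow> nat" where
  "max_degree V adj = Max (deg_in V adj ` V)"

definition is_clique :: "'v set \<Rightarrow> ('v \<Rightarrow> 'v \<Rightarrow> bool) \<Rightarrow> 'v set \<Rightarrow> bool" where
  "is_clique V adj K \<longleftrightarrow> K \<subseteq> V \<and> (\<forall>u\<in>K. \<forall>v\<in>K. u \<noteq> v \<longrightarrow> adj u v)"

definition clique_number :: "'v set \<Rightarrow> ('v \<Rightarrow> 'v \<Rightarrow> bool) \<Rightarrow> nat" where
  "clique_number V adj = Max {card K | K. is_clique V adj K}"

definition is_orientation :: "'v set \<Rightarrow> ('v \<Rightarrow> 'v \<Rightarrow> bool) \<Rightarrow> ('v \<times> 'v) set \<Rightarrow> bool" where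
  "is_orientation S adj A \<longleftrightarrow>
     A \<subseteq> {(u, v). u \<in> S \<and> v \<in> S \<and> adj u v} \<and>
     (\<forall>u\<in>S. \<forall>v\<in>S. adj u v \<longrightarrow> ((u, v) \<in> A \<longleftrightarrow> (v, u) \<notin> A))"

definition outdeg :: "('v \<times> 'v) set \<Rightarrow> 'v \<Rightarrow> nat" where
  "outdeg A v = card {w. (v, w) \<in> A}"

definition indeg :: "('v \<times> 'v) set \<Rightarrow> 'v \<Rightarrow> nat" where
  "indeg A v = card {w. (w, v) \<in> A}"

definition eulerian_subgraphs :: "'v set \<Rightarrow> ('v \<times> 'v) set \<Rightarrow> ('v \<times> 'v) set set" where
  "eulerian_subgraphs S A = {B. B \<subseteq> A \<and> (\<forall>v\<in>S. outdeg B v = indeg B v)}"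

definition AT_orientation :: "'v set \<Rightarrow> ('v \<Rightarrow> 'v \<Rightarrow> bool) \<Rightarrow> ('v \<Rightarrow> int) \<Rightarrow> ('v \<times> 'v) set \<Rightarrow> bool" where
  "AT_orientation S adj f A \<longleftrightarrow> is_orientation S adj A \<and>
     (\<forall>v\<in>S. int (outdeg A v) < f v) \<and>
     card {B \<in> eulerian_subgraphs S A. even (card B)} \<noteq> card {B \<in> eulerian_subgraphs S A. odd (card B)}"

definition f_AT :: "'v set \<Rightarrow> ('v \<Rightarrow> 'v \<Rightarrow> bool) \<Rightarrow> ('v \<Rightarrow> int) \<Rightarrow> bool" where
  "f_AT S adj f \<longleftrightarrow> (\<exists>A. AT_orientation S adj f A)"

text \<open>A finite directed multigraph on S (loopless) is given by arc multiplicities m u v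
  (number of arcs from u to v). Kernel-perfectness only depends on which arcs are present.\<close>
definition has_kernel :: "('v \<Rightarrow> 'v \<Rightarrow> nat) \<Rightarrow> 'v set \<Rightarrow> bool" where
  "has_kernel m T \<longleftrightarrow> (\<exists>I \<subseteq> T. (\<forall>u\<in>I. \<forall>v\<in>I. m u v = 0) \<and>
      (\<forall>u \<in> T - I. \<exists>v\<in>I. m u v > 0))"

definition kernel_perfect :: "'v set \<Rightarrow> ('v \<Rightarrow> 'v \<Rightarrow> nat) \<Rightarrow> bool" where
  "kernel_perfect S m \<longleftrightarrow> (\<forall>T \<subseteq> S. has_kernel m T)"

definition mout :: "'v set \<Rightarrow> ('v \<Rightarrow> 'v \<Rightarrow> nat) \<Rightarrow> 'v \<Rightarrow> nat" where
  "mout S m v = (\<Sum>w\<in>S. m v w)"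

text \<open>An oriented multigraph on S
  whose underlying multigraph contains every edge of the graph on S is exactly a
  multiplicity function m, zero outside S x S and on the diagonal, with m u v + m v u \<ge> 1
  for each edge uv.\<close>
definition f_KP :: "'v set \<Rightarrow> ('v \<Rightarrow> 'v \<Rightarrow> bool) \<Rightarrow> ('v \<Rightarrow> int) \<Rightarrow> bool" where
  "f_KP S adj f \<longleftrightarrow> (\<exists>m :: 'v \<Rightarrow> 'v \<Rightarrow> nat.
     (\<forall>u v. m u v > 0 \<longrightarrow> u \<in> S \<and> v \<in> S \<and> u \<noteq> v) \<and>
     (\<forall>u\<in>S. \<forall>v\<in>S. adj u v \<longrightarrow> m u v + m v u \<ge> 1) \<and>
     kernel_perfect S m \<and>
     (\<forall>v\<in>S. int (mout S m v) < f v))"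

definition f_BK :: "'v set \<Rightarrow> ('v \<Rightarrow> 'v \<Rightarrow> bool) \<Rightarrow> 'v set \<Rightarrow> 'v \<Rightarrow> int" where
  "f_BK V adj S v = int (deg_in S adj v) - 1 + int (max_degree V adj) - int (deg_in V adj v)"

definition BK_free :: "'v set \<Rightarrow> ('v \<Rightarrow> 'v \<Rightarrow> bool) \<Rightarrow> bool" where
  "BK_free V adj \<longleftrightarrow> connected_graph V adj \<and>
     (\<forall>S. S \<subseteq> V \<longrightarrow> S \<noteq> {} \<longrightarrow>
        \<not> f_AT S adj (f_BK V adj S) \<and> \<not> f_KP S adj (f_BK V adj S))"

text \<open>G = (V, adj) is the line graph of the loopless multigraph H whose edge set is V
  and whose edge e has endpoint set ends e (a 2-element set of vertices of H).\<close>
definition line_graph_of :: "'v set \<Rightarrow> ('v \<Rightarrow> 'v \<Rightarrow> bool) \<Rightarrow> ('v \<Rightarrow> 'x set) \<Rightarrow> bool" where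
  "line_graph_of V adj ends \<longleftrightarrow> (\<forall>e\<in>V. card (ends e) = 2) \<and>
     (\<forall>e\<in>V. \<forall>e'\<in>V. e \<noteq> e' \<longrightarrow> (adj e e' \<longleftrightarrow> ends e \<inter> ends e' \<noteq> {}))"

definition multiplicity :: "'v set \<Rightarrow> ('v \<Rightarrow> 'x set) \<Rightarrow> 'x \<Rightarrow> 'x \<Rightarrow> nat" where
  "multiplicity V ends x y = card {e \<in> V. ends e = {x, y}}"

end

theory Submission
  imports Defs
begin


definition okv :: "int list \<Rightarrow> nat \<Rightarrow> int \<Rightarrow> int \<Rightarrow> bool" where
  "okv c u ou iu = (- ou \<le> c!u \<and> c!u \<le> iu)"

fun esum :: "(nat\<times>nat\<times>int\<times>int\<times>int\<times>int) list \<Rightarrow> int list \<Rightarrow> int" where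
  "esum [] b = (if (\<forall>x\<in>set b. x = 0) then 1 else 0)"
| "esum ((u,v,ou,iu,ov,iv)#as) b = 
     (if okv b u ou iu \<and> okv b v ov iv then esum as b else 0) -
     (let c = b[u := b!u + 1, v := b!v - 1] in if okv c u ou iu \<and> okv c v ov iv then esum as c else 0)"

definition strip :: "(nat\<times>nat\<times>int\<times>int\<times>int\<times>int) list \<Rightarrow> (nat \<times> nat) list" where
  "strip as = map (\<lambda>(u,v,_). (u,v)) as"

definition outc :: "(nat \<times> nat) list \<Rightarrow> nat \<Rightarrow> nat" where
  "outc ps i = length (filter (\<lambda>a. fst a = i) ps)"
definition inc :: "(nat \<times> nat) list \<Rightarrow> nat \<Rightarrow> nat" where
  "inc ps i = length (filter (\<lambda>a. snd a = i) ps)"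

fun vann :: "(nat\<times>nat\<times>int\<times>int\<times>int\<times>int) list \<Rightarrow> bool" where
  "vann [] = True"
| "vann ((u,v,ou,iu,ov,iv)#as) = (u \<noteq> v \<and> ou = int (outc (strip as) u) \<and> iu = int (inc (strip as) u)
      \<and> ov = int (outc (strip as) v) \<and> iv = int (inc (strip as) v) \<and> vann as)"

definition dl :: "(nat \<times> nat) set \<Rightarrow> nat \<Rightarrow> int" where
  "dl B i = int (card {j. (i,j) \<in> B}) - int (card {j. (j,i) \<in> B})"

lemma strip_Cons[simp]: "strip ((u,v,ou,iu,ov,iv)#as) = (u,v) # strip as"
  by (simp add: strip_def)
lemma strip_Nil[simp]: "strip [] = []" by (simp add: strip_def)

lemma card_out_le:
  assumes "B \<subseteq> set ps" "distinct ps"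
  shows "card {j. (i,j) \<in> B} \<le> outc ps i"
proof -
  have "{j. (i,j) \<in> B} \<subseteq> snd ` {a \<in> set ps. fst a = i}" using assms(1) by force
  hence "card {j. (i,j) \<in> B} \<le> card (snd ` {a \<in> set ps. fst a = i})"
    by (intro card_mono) auto
  also have "\<dots> \<le> card {a \<in> set ps. fst a = i}" by (rule card_image_le) auto
  also have "\<dots> = outc ps i" unfolding outc_def
    using distinct_card[of "filter (\<lambda>a. fst a = i) ps"] assms(2) by simp
  finally show ?thesis .
qed

lemma card_in_le:
  assumes "B \<subseteq> set ps" "distinct ps"
  shows "card {j. (j,i) \<in> B} \<le> inc ps i"
proof -
  have "{j. (j,i) \<in> B} \<subseteq> fst ` {a \<in> set ps. snd a = i}" using assms(1) by force
  hence "card {j. (j,i) \<in> B} \<le> card (fst ` {a \<in> set ps. snd a = i})"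
    by (intro card_mono) auto
  also have "\<dots> \<le> card {a \<in> set ps. snd a = i}" by (rule card_image_le) auto
  also have "\<dots> = inc ps i" unfolding inc_def
    using distinct_card[of "filter (\<lambda>a. snd a = i) ps"] assms(2) by simp
  finally show ?thesis .
qed

definition ssum :: "(nat \<times> nat) set \<Rightarrow> int list \<Rightarrow> int" where
  "ssum P b = (\<Sum>B\<in>Pow P. if (\<forall>i<length b. b!i + dl B i = 0) then (-1)^card B else 0)"

lemma ssum_zero:
  assumes "P = set ps" "distinct ps" "u < length b"
    and "\<not> okv b u (int (outc ps u)) (int (inc ps u))"
  shows "ssum P b = 0"
  unfolding ssum_def
proof (rule sum.neutral, intro ballI)
  fix B assume "B \<in> Pow P"
  hence B: "B \<subseteq> set ps" using assms by auto
  have "b!u + dl B u \<noteq> 0"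
    using card_out_le[OF B assms(2), of u] card_in_le[OF B assms(2), of u] assms(4)
    unfolding okv_def dl_def by linarith
  thus "(if (\<forall>i<length b. b!i + dl B i = 0) then (-1)^card B else 0) = (0::int)"
    using assms(3) by auto
qed

lemma dl_insert:
  assumes "(u,v) \<notin> B" "finite B" "u \<noteq> v"
  shows "dl (insert (u,v) B) i = dl B i + (if i = u then 1 else 0) - (if i = v then 1 else 0)"
proof -
  have fo: "finite {j. (i,j) \<in> B}"
    using finite_imageI[OF assms(2), of snd] by (rule rev_finite_subset) force
  have fi: "finite {j. (j,i) \<in> B}"
    using finite_imageI[OF assms(2), of fst] by (rule rev_finite_subset) force
  have o: "{j. (i,j) \<in> insert (u,v) B} = (if i = u then insert v {j. (i,j) \<in> B} else {j. (i,j) \<in> B})"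
    by auto
  have n: "{j. (j,i) \<in> insert (u,v) B} = (if i = v then insert u {j. (j,i) \<in> B} else {j. (j,i) \<in> B})"
    by auto
  show ?thesis unfolding dl_def o n using assms fo fi by (auto simp: card_insert_if)
qed

lemma ssum_insert:
  assumes "a \<notin> P" "finite P" "a = (u,v)" "u \<noteq> v" "u < length b" "v < length b"
  shows "ssum (insert a P) b = ssum P b - ssum P (b[u := b!u + 1, v := b!v - 1])"
proof -
  let ?c = "b[u := b!u + 1, v := b!v - 1]"
  let ?F = "\<lambda>b B. if (\<forall>i<length b. b!i + dl B i = 0) then (-1::int)^card B else 0"
  have pw: "Pow (insert a P) = Pow P \<union> insert a ` Pow P" by (rule Pow_insert)
  have dis: "Pow P \<inter> insert a ` Pow P = {}" using assms(1) by auto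
  have fin: "finite (Pow P)" "finite (insert a ` Pow P)" using assms(2) by auto
  have "ssum (insert a P) b = sum (?F b) (Pow P) + sum (?F b) (insert a ` Pow P)"
    unfolding ssum_def pw by (rule sum.union_disjoint[OF fin dis])
  also have "sum (?F b) (insert a ` Pow P) = sum (?F b \<circ> insert a) (Pow P)"
    by (rule sum.reindex) (use assms(1) in \<open>auto simp: inj_on_def\<close>)
  also have "\<dots> = sum (\<lambda>B. - ?F ?c B) (Pow P)"
  proof (rule sum.cong[OF refl])
    fix B assume "B \<in> Pow P"
    hence B: "B \<subseteq> P" "a \<notin> B" "finite B" using assms(1,2) finite_subset by auto
    have cd: "card (insert a B) = Suc (card B)" using B by simp
    have len: "length ?c = length b" by simp
    have eq: "(\<forall>i<length b. b!i + dl (insert a B) i = 0) = (\<forall>i<length ?c. ?c!i + dl B i = 0)"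
    proof -
      have "\<And>i. i < length b \<Longrightarrow> b!i + dl (insert a B) i = ?c!i + dl B i"
        using assms B dl_insert[of u v B] by (auto simp: nth_list_update)
      thus ?thesis by auto
    qed
    show "(?F b \<circ> insert a) B = - ?F ?c B" unfolding comp_def eq cd by simp
  qed
  also have "\<dots> = - ssum P ?c" unfolding ssum_def by (simp add: sum_negf)
  finally show ?thesis by (simp add: ssum_def)
qed

lemma esum_sem:
  "vann as \<Longrightarrow> distinct (strip as) \<Longrightarrow> (\<forall>(u,v)\<in>set (strip as). u < length b \<and> v < length b)
   \<Longrightarrow> esum as b = ssum (set (strip as)) b"
proof (induction as arbitrary: b)
  case Nil
  have "ssum {} b = (if (\<forall>i<length b. b!i = 0) then 1 else 0)"
    unfolding ssum_def Pow_empty by (simp add: dl_def)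
  moreover have "(\<forall>i<length b. b!i = 0) = (\<forall>x\<in>set b. x = 0)" by (metis in_set_conv_nth)
  ultimately show ?case by simp
next
  case (Cons x as)
  obtain u v ou iu ov iv where x: "x = (u,v,ou,iu,ov,iv)" by (cases x) auto
  let ?c = "b[u := b!u + 1, v := b!v - 1]"
  let ?P = "set (strip as)"
  have V: "u \<noteq> v" "ou = int (outc (strip as) u)" "iu = int (inc (strip as) u)"
     "ov = int (outc (strip as) v)" "iv = int (inc (strip as) v)" "vann as"
    using Cons.prems(1) x by auto
  have D: "distinct (strip as)" "(u,v) \<notin> ?P" using Cons.prems(2) x by auto
  have R: "u < length b" "v < length b" "\<forall>(u,v)\<in>?P. u < length b \<and> v < length b"
    using Cons.prems(3) x by auto
  have Rc: "\<forall>(u,v)\<in>?P. u < length ?c \<and> v < length ?c" using R(3) by simp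
  have IH1: "esum as b = ssum ?P b" using Cons.IH[OF V(6) D(1) R(3)] .
  have IH2: "esum as ?c = ssum ?P ?c" using Cons.IH[OF V(6) D(1) Rc] .
  have T1: "(if okv b u ou iu \<and> okv b v ov iv then esum as b else 0) = ssum ?P b"
    using IH1 ssum_zero[OF refl D(1) R(1)] ssum_zero[OF refl D(1) R(2)] V by auto
  have T2: "(if okv ?c u ou iu \<and> okv ?c v ov iv then esum as ?c else 0) = ssum ?P ?c"
    using IH2 ssum_zero[OF refl D(1), of u ?c] ssum_zero[OF refl D(1), of v ?c] V R by auto
  have "esum (x#as) b = ssum ?P b - ssum ?P ?c"
    unfolding x esum.simps Let_def using T1 T2 by simp
  also have "\<dots> = ssum (set (strip (x#as))) b"
    using ssum_insert[OF D(2) finite_set refl V(1) R(1) R(2)] x by simp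
  finally show ?case .
qed



definition tcheck :: "nat \<Rightarrow> (nat\<times>nat\<times>int\<times>int\<times>int\<times>int) list \<Rightarrow> nat list \<Rightarrow> bool" where
  "tcheck n as sl = (vann as \<and> distinct (strip as) \<and>
     list_all (\<lambda>(u,v). u < n \<and> v < n \<and> (v,u) \<notin> set (strip as)) (strip as) \<and> length sl = n \<and>
     list_all (\<lambda>i. 2 \<le> inc (strip as) i + sl!i) [0..<n] \<and> esum as (replicate n 0) \<noteq> 0)"

lemma card_out_eq:
  assumes "distinct ps" shows "card {j. (i,j) \<in> set ps} = outc ps i"
proof -
  have "{j. (i,j) \<in> set ps} = snd ` {a \<in> set ps. fst a = i}" by force
  moreover have "inj_on snd {a \<in> set ps. fst a = i}" by (auto simp: inj_on_def prod_eq_iff)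
  ultimately have "card {j. (i,j) \<in> set ps} = card {a \<in> set ps. fst a = i}"
    by (simp add: card_image)
  also have "\<dots> = outc ps i" unfolding outc_def
    using distinct_card[of "filter (\<lambda>a. fst a = i) ps"] assms by simp
  finally show ?thesis .
qed

lemma card_in_eq:
  assumes "distinct ps" shows "card {j. (j,i) \<in> set ps} = inc ps i"
proof -
  have "{j. (j,i) \<in> set ps} = fst ` {a \<in> set ps. snd a = i}" by force
  moreover have "inj_on fst {a \<in> set ps. snd a = i}" by (auto simp: inj_on_def prod_eq_iff)
  ultimately have "card {j. (j,i) \<in> set ps} = card {a \<in> set ps. snd a = i}"
    by (simp add: card_image)
  also have "\<dots> = inc ps i" unfolding inc_def
    using distinct_card[of "filter (\<lambda>a. snd a = i) ps"] assms by simp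
  finally show ?thesis .
qed

lemma AT_template:
  fixes \<phi> :: "nat \<Rightarrow> 'v" and f :: "'v \<Rightarrow> int"
  assumes inj: "inj_on \<phi> {..<n}"
    and adjp: "\<And>i j. i < n \<Longrightarrow> j < n \<Longrightarrow> adj (\<phi> i) (\<phi> j) = ((i,j) \<in> set (strip as) \<or> (j,i) \<in> set (strip as))"
    and chk: "tcheck n as sl"
    and fb: "\<And>i. i < n \<Longrightarrow> int (deg_in (\<phi> ` {..<n}) adj (\<phi> i)) - 1 + int (sl!i) \<le> f (\<phi> i)"
  shows "f_AT (\<phi> ` {..<n}) adj f"
proof -
  define ps where "ps = strip as"
  define S where "S = \<phi> ` {..<n}"
  define \<Phi> where "\<Phi> = (\<lambda>p::nat\<times>nat. (\<phi> (fst p), \<phi> (snd p)))"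
  define A where "A = \<Phi> ` set ps"
  have C: "vann as" "distinct ps" "\<And>u v. (u,v) \<in> set ps \<Longrightarrow> u < n \<and> v < n \<and> (v,u) \<notin> set ps"
      "length sl = n" "\<And>i. i < n \<Longrightarrow> 2 \<le> inc ps i + sl!i" "esum as (replicate n 0) \<noteq> 0"
    using chk unfolding tcheck_def ps_def list_all_iff by auto
  have rng: "set ps \<subseteq> {..<n} \<times> {..<n}" using C(3) by auto
  have injP: "inj_on \<Phi> ({..<n} \<times> {..<n})"
    using inj unfolding \<Phi>_def by (auto simp: inj_on_def)
  have injPs: "inj_on \<Phi> B" if "B \<subseteq> set ps" for B
    using inj_on_subset[OF injP] rng that by blast
  have outT: "{w. (\<phi> i, w) \<in> \<Phi> ` B} = \<phi> ` {j. (i,j) \<in> B}" if "B \<subseteq> set ps" "i < n" for B i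
  proof
    show "{w. (\<phi> i, w) \<in> \<Phi> ` B} \<subseteq> \<phi> ` {j. (i,j) \<in> B}"
    proof
      fix w assume "w \<in> {w. (\<phi> i, w) \<in> \<Phi> ` B}"
      then obtain k j where kj: "(k,j) \<in> B" "\<phi> i = \<phi> k" "w = \<phi> j" unfolding \<Phi>_def by auto
      have "k < n" using kj(1) that rng by auto
      hence "k = i" using inj kj(2) that(2) by (auto simp: inj_on_def)
      thus "w \<in> \<phi> ` {j. (i,j) \<in> B}" using kj by auto
    qed
  qed (auto simp: \<Phi>_def intro!: rev_image_eqI)
  have inT: "{w. (w, \<phi> i) \<in> \<Phi> ` B} = \<phi> ` {j. (j,i) \<in> B}" if "B \<subseteq> set ps" "i < n" for B i
  proof
    show "{w. (w, \<phi> i) \<in> \<Phi> ` B} \<subseteq> \<phi> ` {j. (j,i) \<in> B}"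
    proof
      fix w assume "w \<in> {w. (w, \<phi> i) \<in> \<Phi> ` B}"
      then obtain k j where kj: "(j,k) \<in> B" "\<phi> i = \<phi> k" "w = \<phi> j" unfolding \<Phi>_def by auto
      have "k < n" using kj(1) that rng by auto
      hence "k = i" using inj kj(2) that(2) by (auto simp: inj_on_def)
      thus "w \<in> \<phi> ` {j. (j,i) \<in> B}" using kj by auto
    qed
  qed (auto simp: \<Phi>_def intro!: rev_image_eqI)
  have odeg: "outdeg (\<Phi> ` B) (\<phi> i) = card {j. (i,j) \<in> B}" if "B \<subseteq> set ps" "i < n" for B i
  proof -
    have "{j. (i,j) \<in> B} \<subseteq> {..<n}" using that rng by auto
    hence "inj_on \<phi> {j. (i,j) \<in> B}" using inj_on_subset[OF inj] by blast
    thus ?thesis unfolding outdeg_def outT[OF that] by (simp add: card_image)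
  qed
  have ideg: "indeg (\<Phi> ` B) (\<phi> i) = card {j. (j,i) \<in> B}" if "B \<subseteq> set ps" "i < n" for B i
  proof -
    have "{j. (j,i) \<in> B} \<subseteq> {..<n}" using that rng by auto
    hence "inj_on \<phi> {j. (j,i) \<in> B}" using inj_on_subset[OF inj] by blast
    thus ?thesis unfolding indeg_def inT[OF that] by (simp add: card_image)
  qed
  have dS: "deg_in S adj (\<phi> i) = outc ps i + inc ps i" if "i < n" for i
  proof -
    have "{w \<in> S. adj (\<phi> i) w} = \<phi> ` {j \<in> {..<n}. (i,j) \<in> set ps \<or> (j,i) \<in> set ps}"
      unfolding S_def using adjp[OF that] ps_def by auto
    moreover have "inj_on \<phi> {j \<in> {..<n}. (i,j) \<in> set ps \<or> (j,i) \<in> set ps}"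
      by (rule inj_on_subset[OF inj]) auto
    ultimately have "deg_in S adj (\<phi> i) = card {j \<in> {..<n}. (i,j) \<in> set ps \<or> (j,i) \<in> set ps}"
      unfolding deg_in_def by (simp add: card_image)
    also have "{j \<in> {..<n}. (i,j) \<in> set ps \<or> (j,i) \<in> set ps} = {j. (i,j) \<in> set ps} \<union> {j. (j,i) \<in> set ps}"
      using rng by auto
    also have "card \<dots> = card {j. (i,j) \<in> set ps} + card {j. (j,i) \<in> set ps}"
    proof (rule card_Un_disjoint)
      show "finite {j. (i, j) \<in> set ps}"
        by (rule finite_subset[of _ "snd ` set ps"]) force+
      show "finite {j. (j, i) \<in> set ps}"
        by (rule finite_subset[of _ "fst ` set ps"]) force+
      show "{j. (i, j) \<in> set ps} \<inter> {j. (j, i) \<in> set ps} = {}" using C(3) by auto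
    qed
    finally show ?thesis using card_out_eq[OF C(2)] card_in_eq[OF C(2)] by simp
  qed
  have orient: "is_orientation S adj A"
    unfolding is_orientation_def
  proof (intro conjI ballI impI)
    show "A \<subseteq> {(u, v). u \<in> S \<and> v \<in> S \<and> adj u v}"
    proof
      fix p assume "p \<in> A"
      then obtain i j where ij: "(i,j) \<in> set ps" "p = (\<phi> i, \<phi> j)" unfolding A_def \<Phi>_def by auto
      have "i < n" "j < n" using C(3)[OF ij(1)] by auto
      thus "p \<in> {(u, v). u \<in> S \<and> v \<in> S \<and> adj u v}"
        using ij adjp[of i j] unfolding S_def ps_def by auto
    qed
  next
    fix u v assume uv: "u \<in> S" "v \<in> S" "adj u v"
    then obtain i j where ij: "i < n" "j < n" "u = \<phi> i" "v = \<phi> j" unfolding S_def by auto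
    have mem: "(\<phi> k, \<phi> l) \<in> A \<longleftrightarrow> (k,l) \<in> set ps" if "k < n" "l < n" for k l
    proof
      assume "(\<phi> k, \<phi> l) \<in> A"
      then obtain k' l' where "(k',l') \<in> set ps" "\<phi> k = \<phi> k'" "\<phi> l = \<phi> l'"
        unfolding A_def \<Phi>_def by auto
      moreover have "k' < n" "l' < n" using C(3) calculation(1) by auto
      ultimately show "(k,l) \<in> set ps" using inj that by (auto simp: inj_on_def)
    qed (auto simp: A_def \<Phi>_def intro!: rev_image_eqI)
    have "(i,j) \<in> set ps \<or> (j,i) \<in> set ps" using adjp[OF ij(1,2)] uv ij ps_def by auto
    thus "((u, v) \<in> A) = ((v, u) \<notin> A)" using mem[OF ij(1,2)] mem[OF ij(2,1)] ij C(3) by auto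
  qed
  have obound: "int (outdeg A v) < f v" if vS: "v \<in> S" for v
  proof -
    obtain i where i: "i < n" "v = \<phi> i" using vS S_def by auto
    have "outdeg A v = outc ps i" using odeg[OF subset_refl i(1)] card_out_eq[OF C(2)] i A_def by simp
    thus ?thesis using fb[OF i(1)] dS[OF i(1)] C(5)[OF i(1)] i S_def by simp
  qed
  define E' where "E' = {B \<in> Pow (set ps). \<forall>i<n. dl B i = 0}"
  have euler: "eulerian_subgraphs S A = (\<lambda>B. \<Phi> ` B) ` E'"
  proof
    show "eulerian_subgraphs S A \<subseteq> (\<lambda>B. \<Phi> ` B) ` E'"
    proof
      fix B assume B: "B \<in> eulerian_subgraphs S A"
      define B' where "B' = {p \<in> set ps. \<Phi> p \<in> B}"
      have BB: "B = \<Phi> ` B'" using B unfolding eulerian_subgraphs_def A_def B'_def by auto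
      have "B' \<subseteq> set ps" unfolding B'_def by auto
      moreover have "\<forall>i<n. dl B' i = 0"
      proof (intro allI impI)
        fix i assume "i < n"
        hence "outdeg B (\<phi> i) = indeg B (\<phi> i)" using B unfolding eulerian_subgraphs_def S_def by auto
        thus "dl B' i = 0" unfolding BB dl_def
          using odeg[OF \<open>B' \<subseteq> set ps\<close> \<open>i<n\<close>] ideg[OF \<open>B' \<subseteq> set ps\<close> \<open>i<n\<close>] by simp
      qed
      ultimately show "B \<in> (\<lambda>B. \<Phi> ` B) ` E'" unfolding E'_def BB by auto
    qed
  next
    show "(\<lambda>B. \<Phi> ` B) ` E' \<subseteq> eulerian_subgraphs S A"
    proof
      fix B assume "B \<in> (\<lambda>B. \<Phi> ` B) ` E'"
      then obtain B' where B': "B' \<subseteq> set ps" "\<forall>i<n. dl B' i = 0" "B = \<Phi> ` B'"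
        unfolding E'_def by auto
      have "B \<subseteq> A" using B' unfolding A_def by auto
      moreover have "\<forall>v\<in>S. outdeg B v = indeg B v"
      proof
        fix v assume vS: "v \<in> S"
        obtain i where i: "i < n" "v = \<phi> i" using vS S_def by auto
        show "outdeg B v = indeg B v" using B'(2) i odeg[OF B'(1) i(1)] ideg[OF B'(1) i(1)] B'(3)
          unfolding dl_def by simp
      qed
      ultimately show "B \<in> eulerian_subgraphs S A" unfolding eulerian_subgraphs_def by auto
    qed
  qed
  have injE: "inj_on (\<lambda>B. \<Phi> ` B) E'"
  proof (rule inj_onI)
    fix B1 B2 assume "B1 \<in> E'" "B2 \<in> E'" "\<Phi> ` B1 = \<Phi> ` B2"
    thus "B1 = B2" using inj_on_image_eq_iff[OF injPs[OF subset_refl]] unfolding E'_def by auto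
  qed
  have cardE: "card (\<Phi> ` B) = card B" if "B \<in> E'" for B
    using that injPs unfolding E'_def by (auto simp: card_image)
  have finE: "finite E'" unfolding E'_def by auto
  have cnt: "card {B \<in> eulerian_subgraphs S A. P (card B)} = card {B \<in> E'. P (card B)}" for P
  proof -
    have "{B \<in> eulerian_subgraphs S A. P (card B)} = (\<lambda>B. \<Phi> ` B) ` {B \<in> E'. P (card B)}"
      unfolding euler using cardE by auto
    moreover have "inj_on (\<lambda>B. \<Phi> ` B) {B \<in> E'. P (card B)}" by (rule inj_on_subset[OF injE]) auto
    ultimately show ?thesis by (simp add: card_image)
  qed
  have "esum as (replicate n 0) = ssum (set ps) (replicate n 0)"
    using esum_sem[OF C(1), of "replicate n 0"] C(2) C(3) unfolding ps_def by fastforce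
  also have "\<dots> = (\<Sum>B\<in>E'. (-1::int)^card B)"
    unfolding ssum_def E'_def by (rule sum.mono_neutral_cong_right) auto
  also have "\<dots> = (\<Sum>B\<in>{B\<in>E'. even (card B)}. (-1::int)^card B) + (\<Sum>B\<in>{B\<in>E'. odd (card B)}. (-1::int)^card B)"
  proof -
    have U: "{B\<in>E'. even (card B)} \<union> {B\<in>E'. odd (card B)} = E'" by auto
    have "(\<Sum>B\<in>{B\<in>E'. even (card B)} \<union> {B\<in>E'. odd (card B)}. (-1::int)^card B) =
      (\<Sum>B\<in>{B\<in>E'. even (card B)}. (-1::int)^card B) + (\<Sum>B\<in>{B\<in>E'. odd (card B)}. (-1::int)^card B)"
      by (rule sum.union_disjoint) (use finE in auto)
    thus ?thesis unfolding U .
  qed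
  also have "\<dots> = int (card {B\<in>E'. even (card B)}) - int (card {B\<in>E'. odd (card B)})"
    by simp
  finally have "card {B\<in>E'. even (card B)} \<noteq> card {B\<in>E'. odd (card B)}" using C(6) by auto
  hence "card {B \<in> eulerian_subgraphs S A. even (card B)} \<noteq> card {B \<in> eulerian_subgraphs S A. odd (card B)}"
    using cnt[of even] cnt[of odd] by metis
  hence "AT_orientation S adj f A" unfolding AT_orientation_def using orient obound by auto
  thus ?thesis unfolding f_AT_def S_def by auto
qed


definition tpl_C1 :: "(nat*nat*int*int*int*int) list" where "tpl_C1 = [(2,4,3,1,2,1), (4,0,1,1,1,3), (2,0,2,1,1,2), (3,4,2,2,1,0), (2,3,1,1,2,1), (3,0,1,1,1,1), (4,1,0,0,2,2), (1,2,1,2,1,0), (1,0,0,2,1,0), (3,1,0,1,0,1), (2,5,0,0,2,1), (0,5,0,0,2,0), (5,3,1,0,0,0), (5,1,0,0,0,0)]"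
definition "sl_C1 = [1, 1, 1, 1, 0, 0::nat]"
lemma chk_C1: "tcheck 6 tpl_C1 sl_C1"
  unfolding tpl_C1_def sl_C1_def by code_simp

definition tpl_s1 :: "(nat*nat*int*int*int*int) list" where "tpl_s1 = [(1,5,3,1,2,1), (5,3,1,1,1,3), (1,3,2,1,1,2), (5,0,0,1,3,1), (0,1,2,1,2,0), (0,3,1,1,1,1), (2,5,1,3,0,0), (1,2,1,0,1,2), (2,3,0,2,1,0), (0,2,0,1,0,1), (1,4,0,0,2,1), (3,4,0,0,2,0), (4,0,1,0,0,0), (4,2,0,0,0,0)]"
definition "sl_s1 = [1, 1, 1, 0, 0, 0::nat]"
lemma chk_s1: "tcheck 6 tpl_s1 sl_s1"
  unfolding tpl_s1_def sl_s1_def by code_simp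

definition tpl_none :: "(nat*nat*int*int*int*int) list" where "tpl_none = [(5,4,1,3,3,1), (1,4,4,2,3,0), (1,5,3,2,1,2), (4,0,2,0,2,4), (5,0,0,2,2,3), (0,1,1,3,3,1), (4,2,1,0,3,3), (2,5,2,3,0,1), (1,2,2,1,2,2), (0,2,0,3,2,1), (4,3,0,0,4,2), (3,5,3,2,0,0), (1,3,1,1,3,1), (3,0,2,1,0,2), (2,3,1,1,2,0), (1,7,0,1,2,2), (7,0,1,2,0,1), (7,2,0,2,1,0), (3,7,1,0,0,1), (6,1,2,2,0,0), (6,0,1,2,0,0), (2,6,0,0,1,1), (3,6,0,0,1,0), (6,7,0,0,0,0)]"
definition "sl_none = [0, 0, 0, 0, 0, 0, 0, 0::nat]"
lemma chk_none: "tcheck 8 tpl_none sl_none"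
  unfolding tpl_none_def sl_none_def by code_simp

definition tpl_one :: "(nat*nat*int*int*int*int) list" where "tpl_one = [(5,2,1,3,0,6), (5,4,0,3,4,1), (4,2,3,1,0,5), (0,5,4,2,0,2), (0,2,3,2,0,4), (0,4,2,2,3,0), (1,5,2,4,0,1), (1,2,1,4,0,3), (4,1,2,0,1,3), (0,1,1,2,1,2), (3,5,3,3,0,0), (3,2,2,3,0,2), (4,3,1,0,2,2), (0,3,0,2,2,1), (3,1,1,1,1,1), (6,2,3,2,0,1), (4,6,0,0,3,1), (6,0,2,1,0,1), (6,1,1,1,1,0), (6,3,0,1,1,0), (7,2,2,2,0,0), (7,0,1,2,0,0), (1,7,0,0,1,1), (3,7,0,0,1,0), (7,6,0,0,0,0)]"
definition "sl_one = [0, 0, 0, 0, 0, 0, 0, 0::nat]"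
lemma chk_one: "tcheck 8 tpl_one sl_one"
  unfolding tpl_one_def sl_one_def by code_simp

definition tpl_two :: "(nat*nat*int*int*int*int) list" where "tpl_two = [(0,2,0,6,0,6), (5,2,3,2,0,5), (5,0,2,2,0,5), (3,2,4,2,0,4), (3,0,3,2,0,4), (3,5,2,2,2,1), (4,2,3,2,0,3), (4,0,2,2,0,3), (4,5,1,2,2,0), (3,4,1,2,1,1), (7,2,3,2,0,2), (7,0,2,2,0,2), (5,7,1,0,2,1), (7,3,1,1,1,1), (1,2,3,3,0,1), (1,0,2,3,0,1), (5,1,0,0,2,2), (3,1,0,1,2,1), (1,4,1,1,1,0), (7,1,0,1,1,0), (6,2,3,2,0,0), (6,0,2,2,0,0), (6,3,1,2,0,0), (4,6,0,0,1,1), (6,7,0,1,0,0), (1,6,0,0,0,0)]"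
definition "sl_two = [0, 0, 0, 0, 0, 0, 0, 0::nat]"
lemma chk_two: "tcheck 8 tpl_two sl_two"
  unfolding tpl_two_def sl_two_def by code_simp

definition tpl_xy :: "(nat*nat*int*int*int*int) list" where "tpl_xy = [(4,6,2,2,1,2), (6,2,0,2,2,3), (4,2,1,2,2,2), (1,6,3,2,0,1), (1,4,2,2,1,1), (1,2,1,2,2,1), (0,6,2,3,0,0), (4,0,0,1,2,2), (0,2,1,2,2,0), (0,1,0,2,1,1), (3,4,2,2,0,0), (2,3,1,0,2,1), (1,3,0,1,2,0), (3,0,1,0,0,1), (2,5,0,0,2,1), (5,1,1,1,0,0), (5,0,0,1,0,0), (3,5,0,0,0,0)]"
definition "sl_xy = [0, 0, 0, 0, 0, 0, 0::nat]"
lemma chk_xy: "tcheck 7 tpl_xy sl_xy"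
  unfolding tpl_xy_def sl_xy_def by code_simp

definition tpl_xyt :: "(nat*nat*int*int*int*int) list" where "tpl_xyt = [(3,1,2,2,0,5), (5,1,2,2,0,4), (3,5,1,2,2,1), (4,1,2,2,0,3), (4,3,1,2,1,1), (2,1,3,2,0,2), (2,3,2,2,1,0), (2,5,1,2,2,0), (2,4,0,2,1,1), (0,1,2,3,0,1), (3,0,0,0,2,2), (5,0,1,0,2,1), (4,0,0,1,2,0), (0,2,1,0,0,1), (6,1,2,2,0,0), (5,6,0,0,2,1), (6,4,1,1,0,0), (6,2,0,1,0,0), (0,6,0,0,0,0)]"
definition "sl_xyt = [0, 0, 0, 0, 0, 0, 0::nat]"
lemma chk_xyt: "tcheck 7 tpl_xyt sl_xyt"
  unfolding tpl_xyt_def sl_xyt_def by code_simp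


definition adjcheck :: "nat \<Rightarrow> (nat \<times> nat) list \<Rightarrow> (nat\<times>nat\<times>int\<times>int\<times>int\<times>int) list \<Rightarrow> bool" where
  "adjcheck n en as = list_all (\<lambda>i. list_all (\<lambda>j.
      (i \<noteq> j \<and> (fst (en!i) = fst (en!j) \<or> fst (en!i) = snd (en!j) \<or> snd (en!i) = fst (en!j) \<or> snd (en!i) = snd (en!j)))
      = ((i,j) \<in> set (strip as) \<or> (j,i) \<in> set (strip as))) [0..<n]) [0..<n]"

locale LG =
  fixes V :: "'v set" and adj :: "'v \<Rightarrow> 'v \<Rightarrow> bool" and ends :: "'v \<Rightarrow> 'x set"
  assumes sg: "simple_graph V adj"
    and bk: "BK_free V adj"
    and om: "clique_number V adj < max_degree V adj"
    and lg: "line_graph_of V adj ends"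
begin

abbreviation "\<Delta> \<equiv> max_degree V adj"
abbreviation "\<omega> \<equiv> clique_number V adj"

lemma finV: "finite V" using sg unfolding simple_graph_def by auto
lemma Vne: "V \<noteq> {}" using bk unfolding BK_free_def connected_graph_def by auto

lemma adj_iff: "adj e e' \<longleftrightarrow> e \<in> V \<and> e' \<in> V \<and> e \<noteq> e' \<and> ends e \<inter> ends e' \<noteq> {}"
  using sg lg unfolding simple_graph_def line_graph_of_def by blast

lemma card_ends: "e \<in> V \<Longrightarrow> card (ends e) = 2" using lg unfolding line_graph_of_def by auto

lemma deg_le: "e \<in> V \<Longrightarrow> deg_in V adj e \<le> \<Delta>"
  unfolding max_degree_def using finV by (intro Max_ge) auto

lemma config_False:
  assumes l: "distinct l" "set l \<subseteq> V"
    and hv: "distinct hv"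
    and en: "list_all2 (\<lambda>e (p,q). ends e = {hv!p, hv!q}) l en"
    and rng: "list_all (\<lambda>(p,q). p < length hv \<and> q < length hv) en"
    and chk: "tcheck (length l) as sl"
    and ac: "adjcheck (length l) en as"
    and sk: "list_all2 (\<lambda>e s. s = 0 \<or> int s \<le> int \<Delta> - int (deg_in V adj e)) l sl"
    and ne: "l \<noteq> []"
  shows False
proof -
  define n where "n = length l"
  have len: "length en = n" "length sl = n" using list_all2_lengthD[OF en] list_all2_lengthD[OF sk] n_def by auto
  have S: "(!) l ` {..<n} = set l" unfolding n_def by (auto simp: in_set_conv_nth)
  have inj: "inj_on ((!) l) {..<n}" using l(1) unfolding n_def by (auto simp: inj_on_def nth_eq_iff_index_eq)
  have enf: "ends (l!i) = {hv ! fst (en!i), hv ! snd (en!i)}" if "i < n" for i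
    using list_all2_nthD[OF en, of i] that n_def by (auto split: prod.splits)
  have rngi: "fst (en!i) < length hv" "snd (en!i) < length hv" if "i < n" for i
  proof -
    have m: "en!i \<in> set en" using that len by simp
    obtain p q where pq: "en!i = (p,q)" by (cases "en!i")
    have "p < length hv \<and> q < length hv" using rng m pq unfolding list_all_iff by fastforce
    thus "fst (en!i) < length hv" "snd (en!i) < length hv" using pq by auto
  qed
  have adjp: "adj (l!i) (l!j) = ((i,j) \<in> set (strip as) \<or> (j,i) \<in> set (strip as))" if "i < n" "j < n" for i j
  proof -
    have inV: "l!i \<in> V" "l!j \<in> V" using l(2) that n_def nth_mem by auto
    have neq: "(l!i \<noteq> l!j) = (i \<noteq> j)" using l(1) that n_def nth_eq_iff_index_eq by auto
    define a where "a = fst (en!i)"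
    define b where "b = snd (en!i)"
    define c where "c = fst (en!j)"
    define d where "d = snd (en!j)"
    have r: "a < length hv" "b < length hv" "c < length hv" "d < length hv"
      using rngi[OF that(1)] rngi[OF that(2)] a_def b_def c_def d_def by auto
    have I: "({hv!a, hv!b} \<inter> {hv!c, hv!d} \<noteq> {}) = (hv!a = hv!c \<or> hv!a = hv!d \<or> hv!b = hv!c \<or> hv!b = hv!d)"
      by blast
    have I2: "(hv!a = hv!c \<or> hv!a = hv!d \<or> hv!b = hv!c \<or> hv!b = hv!d) = (a = c \<or> a = d \<or> b = c \<or> b = d)"
      using nth_eq_iff_index_eq[OF hv r(1) r(3)] nth_eq_iff_index_eq[OF hv r(1) r(4)]
        nth_eq_iff_index_eq[OF hv r(2) r(3)] nth_eq_iff_index_eq[OF hv r(2) r(4)] by simp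
    have "adj (l!i) (l!j) = (l!i \<noteq> l!j \<and> ends (l!i) \<inter> ends (l!j) \<noteq> {})"
      unfolding adj_iff using inV by simp
    also have "\<dots> = (i \<noteq> j \<and> (a = c \<or> a = d \<or> b = c \<or> b = d))"
      unfolding neq enf[OF that(1)] enf[OF that(2)] a_def[symmetric] b_def[symmetric] c_def[symmetric] d_def[symmetric] I I2 ..
    also have "\<dots> = (i \<noteq> j \<and> (fst (en!i) = fst (en!j) \<or> fst (en!i) = snd (en!j) \<or> snd (en!i) = fst (en!j) \<or> snd (en!i) = snd (en!j)))"
      unfolding a_def b_def c_def d_def ..
    also have "\<dots> = ((i,j) \<in> set (strip as) \<or> (j,i) \<in> set (strip as))"
      using ac that unfolding adjcheck_def list_all_iff n_def by auto
    finally show ?thesis .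
  qed
  have fb: "int (deg_in ((!) l ` {..<n}) adj (l!i)) - 1 + int (sl!i) \<le> f_BK V adj (set l) (l!i)" if "i < n" for i
  proof -
    have "l!i \<in> V" using l(2) that n_def nth_mem by auto
    hence "deg_in V adj (l!i) \<le> \<Delta>" by (rule deg_le)
    moreover have "sl!i = 0 \<or> int (sl!i) \<le> int \<Delta> - int (deg_in V adj (l!i))"
      using list_all2_nthD[OF sk, of i] that n_def by auto
    ultimately show ?thesis unfolding f_BK_def S by auto
  qed
  have "f_AT ((!) l ` {..<n}) adj (f_BK V adj (set l))"
    by (rule AT_template[OF inj adjp _ fb]) (use chk n_def in auto)
  hence "f_AT (set l) adj (f_BK V adj (set l))" using S by simp
  moreover have "set l \<subseteq> V" "set l \<noteq> {}" using l ne by auto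
  ultimately show False using bk unfolding BK_free_def by blast
qed

definition Ed :: "'x \<Rightarrow> 'v set" where "Ed u = {e \<in> V. u \<in> ends e}"

lemma finEd: "finite (Ed u)" unfolding Ed_def using finV by auto

lemma ends_two: assumes "e \<in> V" obtains u v where "u \<noteq> v" "ends e = {u,v}"
  using card_ends[OF assms] by (auto simp: card_2_iff)

lemma ends_eq: assumes "e \<in> V" "x \<in> ends e" "y \<in> ends e" "x \<noteq> y" shows "ends e = {x,y}"
proof -
  obtain u v where uv: "u \<noteq> v" "ends e = {u,v}" using ends_two[OF assms(1)] by blast
  thus ?thesis using assms by auto
qed

lemma ends_other: assumes "e \<in> V" "x \<in> ends e" obtains z where "z \<noteq> x" "ends e = {x,z}"
proof -
  obtain u v where uv: "u \<noteq> v" "ends e = {u,v}" using ends_two[OF assms(1)] by blast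
  show ?thesis
  proof (cases "x = u")
    case True thus ?thesis using that[of v] uv by auto
  next
    case False hence "x = v" using assms(2) uv by auto
    thus ?thesis using that[of u] uv by (auto simp: insert_commute)
  qed
qed

lemma deg_U: assumes "e \<in> V" "ends e = {u,v}"
  shows "deg_in V adj e = card (Ed u \<union> Ed v) - 1"
proof -
  have "{w \<in> V. adj e w} = (Ed u \<union> Ed v) - {e}"
    unfolding Ed_def using assms by (auto simp: adj_iff)
  moreover have "e \<in> Ed u \<union> Ed v" unfolding Ed_def using assms by auto
  ultimately show ?thesis unfolding deg_in_def using finEd by (simp add: card_Diff_singleton)
qed

lemma deg_ge: assumes "e \<in> V" shows "\<Delta> \<le> deg_in V adj e + 1"
proof (rule ccontr)
  assume a: "\<not> ?thesis"
  obtain u v where uv: "u \<noteq> v" "ends e = {u,v}" using ends_two[OF assms] by blast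
  have t: "tcheck 1 [] [2]" unfolding tcheck_def by code_simp
  have ac: "adjcheck 1 [(0,1)] []" unfolding adjcheck_def by code_simp
  show False
    by (rule config_False[of "[e]" "[u,v]" "[(0,1)]" "[]" "[2]"]) (use assms uv t ac a in auto)
qed

lemma clique_lt: assumes "K \<subseteq> V" "\<And>e e'. e \<in> K \<Longrightarrow> e' \<in> K \<Longrightarrow> e \<noteq> e' \<Longrightarrow> ends e \<inter> ends e' \<noteq> {}"
  shows "card K < \<Delta>"
proof -
  have cl: "is_clique V adj K" unfolding is_clique_def using assms by (auto simp: adj_iff)
  have "{card K | K. is_clique V adj K} \<subseteq> card ` Pow V" unfolding is_clique_def by auto
  hence fin: "finite {card K | K. is_clique V adj K}" using finV finite_subset by blast
  have "card K \<le> \<omega>" unfolding clique_number_def by (rule Max_ge[OF fin]) (use cl in auto)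
  thus ?thesis using om by simp
qed

lemma pick_list: assumes "finite S" "n \<le> card S" shows "\<exists>xs. distinct xs \<and> length xs = n \<and> set xs \<subseteq> S"
proof -
  obtain B where B: "B \<subseteq> S" "card B = n" using obtain_subset_with_card_n[OF assms(2)] by blast
  have "finite B" using B(1) assms(1) finite_subset by blast
  then obtain xs where "set xs = B" "distinct xs" using finite_distinct_list by blast
  thus ?thesis using B distinct_card by fastforce
qed

lemma pick2: assumes "finite S" "2 \<le> card S" obtains a b where "a \<in> S" "b \<in> S" "a \<noteq> b"
proof -
  obtain xs where xs: "distinct xs" "length xs = 2" "set xs \<subseteq> S" using pick_list[OF assms] by blast
  then obtain a b where "xs = [a,b]" by (auto simp: numeral_eq_Suc length_Suc_conv)
  thus ?thesis using that xs by auto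
qed

lemma pick3: assumes "finite S" "3 \<le> card S" obtains a b c where "a \<in> S" "b \<in> S" "c \<in> S" "distinct [a,b,c]"
proof -
  obtain xs where xs: "distinct xs" "length xs = 3" "set xs \<subseteq> S" using pick_list[OF assms] by blast
  then obtain a b c where "xs = [a,b,c]" by (auto simp: numeral_eq_Suc length_Suc_conv)
  thus ?thesis using that xs by auto
qed

lemma pick4: assumes "finite S" "4 \<le> card S" obtains a b c d where "a \<in> S" "b \<in> S" "c \<in> S" "d \<in> S" "distinct [a,b,c,d]"
proof -
  obtain xs where xs: "distinct xs" "length xs = 4" "set xs \<subseteq> S" using pick_list[OF assms] by blast
  then obtain a b c d where "xs = [a,b,c,d]" by (auto simp: numeral_eq_Suc length_Suc_conv)
  thus ?thesis using that xs by auto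
qed

lemma mult_self: "multiplicity V ends x x = 0"
proof -
  have "{e \<in> V. ends e = {x,x}} = {}" using card_ends by fastforce
  thus ?thesis unfolding multiplicity_def by (metis card.empty)
qed

lemma mult_sym: "multiplicity V ends x y = multiplicity V ends y x"
  unfolding multiplicity_def by (simp add: insert_commute)

definition far :: "'x \<Rightarrow> 'v \<Rightarrow> 'x" where "far x g = (SOME z. ends g = {x,z} \<and> z \<noteq> x)"

lemma far: assumes "g \<in> V" "x \<in> ends g" shows "ends g = {x, far x g}" "far x g \<noteq> x"
proof -
  obtain z where "z \<noteq> x" "ends g = {x,z}" using ends_other[OF assms] by blast
  hence "\<exists>z. ends g = {x,z} \<and> z \<noteq> x" by blast
  hence "ends g = {x, far x g} \<and> far x g \<noteq> x" unfolding far_def by (rule someI_ex)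
  thus "ends g = {x, far x g}" "far x g \<noteq> x" by auto
qed

lemma Ed_clique: "card (Ed x) < \<Delta>"
  by (rule clique_lt) (auto simp: Ed_def)

lemma part1:
  assumes xy: "x \<noteq> y" and m4: "4 \<le> multiplicity V ends x y"
  shows False
proof -
  define A where "A = {e \<in> V. ends e = {x,y}}"
  define U where "U = Ed x \<union> Ed y"
  define P where "P = Ed x - Ed y"
  define Q where "Q = Ed y - Ed x"
  have finA: "finite A" unfolding A_def using finV by auto
  have cA: "4 \<le> card A" using m4 unfolding A_def multiplicity_def .
  obtain a1 a2 a3 a4 where a: "a1 \<in> A" "a2 \<in> A" "a3 \<in> A" "a4 \<in> A" "distinct [a1,a2,a3,a4]"
    using pick4[OF finA cA] by blast
  have Ae: "e \<in> V" "ends e = {x,y}" "e \<in> Ed x" "e \<in> Ed y" if "e \<in> A" for e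
    using that unfolding A_def Ed_def by auto
  have finU: "finite U" unfolding U_def using finEd by auto
  have degA: "deg_in V adj e = card U - 1" if "e \<in> A" for e
    using deg_U[OF Ae(1,2)[OF that]] U_def by simp
  have cU: "0 < card U" using finU Ae(3)[OF a(1)] U_def card_gt_0_iff by blast
  have D1: "\<Delta> \<le> card U" using deg_ge[OF Ae(1)[OF a(1)]] degA[OF a(1)] cU by simp
  have D0: "card U - 1 \<le> \<Delta>" using deg_le[OF Ae(1)[OF a(1)]] degA[OF a(1)] by simp
  have Pf: "g \<in> V" "x \<in> ends g" "ends g = {x, far x g}" "far x g \<noteq> x" "far x g \<noteq> y" "y \<notin> ends g" if "g \<in> P" for g
  proof -
    show gV: "g \<in> V" "x \<in> ends g" "y \<notin> ends g" using that unfolding P_def Ed_def by auto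
    show "ends g = {x, far x g}" "far x g \<noteq> x" using far[OF gV(1,2)] by auto
    thus "far x g \<noteq> y" using gV(3) by auto
  qed
  have Qf: "h \<in> V" "y \<in> ends h" "ends h = {y, far y h}" "far y h \<noteq> y" "far y h \<noteq> x" "x \<notin> ends h" if "h \<in> Q" for h
  proof -
    show hV: "h \<in> V" "y \<in> ends h" "x \<notin> ends h" using that unfolding Q_def Ed_def by auto
    show "ends h = {y, far y h}" "far y h \<noteq> y" using far[OF hV(1,2)] by auto
    thus "far y h \<noteq> x" using hV(3) by auto
  qed
  have interPQ: "(ends g \<inter> ends h \<noteq> {}) = (far x g = far y h)" if "g \<in> P" "h \<in> Q" for g h
    using Pf[OF that(1)] Qf[OF that(2)] xy by auto
  have UV: "U \<subseteq> V" unfolding U_def Ed_def by auto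
  show False
  proof (cases "\<Delta> = card U")
    case True
    have "\<exists>g\<in>P. \<exists>h\<in>Q. far x g \<noteq> far y h"
    proof (rule ccontr)
      assume no: "\<not> ?thesis"
      have "card U < \<Delta>"
      proof (rule clique_lt[OF UV])
        fix e e' assume ee: "e \<in> U" "e' \<in> U" "e \<noteq> e'"
        show "ends e \<inter> ends e' \<noteq> {}"
        proof (cases "e \<in> Ed x \<and> e' \<in> Ed x \<or> e \<in> Ed y \<and> e' \<in> Ed y")
          case True thus ?thesis unfolding Ed_def by auto
        next
          case False
          hence "e \<in> P \<and> e' \<in> Q \<or> e \<in> Q \<and> e' \<in> P" using ee unfolding U_def P_def Q_def by auto
          thus ?thesis using no interPQ by (metis inf_commute)
        qed
      qed
      thus False using True by simp
    qed
    then obtain g h where gh: "g \<in> P" "h \<in> Q" "far x g \<noteq> far y h" by blast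
    have sl: "int 1 \<le> int \<Delta> - int (deg_in V adj e)" if "e \<in> A" for e
      using degA[OF that] True cU by simp
    show False
    proof (rule config_False[of "[a1,a2,a3,a4,g,h]" "[x,y,far x g,far y h]"
          "[(0,1),(0,1),(0,1),(0,1),(0,2),(1,3)]" tpl_C1 sl_C1])
      show "distinct [a1,a2,a3,a4,g,h]" using a Ae Pf(6)[OF gh(1)] Qf(6)[OF gh(2)] gh by (auto simp: P_def Q_def)
      show "set [a1,a2,a3,a4,g,h] \<subseteq> V" using a Ae Pf(1)[OF gh(1)] Qf(1)[OF gh(2)] by auto
      show "distinct [x,y,far x g,far y h]" using xy Pf[OF gh(1)] Qf[OF gh(2)] gh(3) by auto
      show "list_all2 (\<lambda>e (p,q). ends e = {[x,y,far x g,far y h]!p, [x,y,far x g,far y h]!q})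
          [a1,a2,a3,a4,g,h] [(0,1),(0,1),(0,1),(0,1),(0,2),(1,3)]"
        using a Ae Pf[OF gh(1)] Qf[OF gh(2)] by simp
      show "list_all (\<lambda>(p,q). p < length [x,y,far x g,far y h] \<and> q < length [x,y,far x g,far y h])
          [(0,1),(0,1),(0,1),(0,1),(0,2),(1,3)]" by simp
      show "tcheck (length [a1,a2,a3,a4,g,h]) tpl_C1 sl_C1" using chk_C1 by (simp add: numeral_eq_Suc)
      show "adjcheck (length [a1,a2,a3,a4,g,h]) [(0,1),(0,1),(0,1),(0,1),(0,2),(1,3)] tpl_C1"
        unfolding adjcheck_def tpl_C1_def by code_simp
      show "list_all2 (\<lambda>e s. s = 0 \<or> int s \<le> int \<Delta> - int (deg_in V adj e)) [a1,a2,a3,a4,g,h] sl_C1"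
        unfolding sl_C1_def using sl a by simp
    qed simp
  next
    case False
    hence D: "\<Delta> + 1 = card U" using D0 D1 by linarith
    have cQ: "2 \<le> card Q"
    proof -
      have e: "U = Ed x \<union> Q" "Ed x \<inter> Q = {}" unfolding U_def Q_def by auto
      have "finite Q" unfolding Q_def using finEd by auto
      hence "card U = card (Ed x) + card Q" using card_Un_disjoint[OF finEd \<open>finite Q\<close> e(2)] e(1) by simp
      thus ?thesis using Ed_clique[of x] D by linarith
    qed
    have cP: "2 \<le> card P"
    proof -
      have e: "U = Ed y \<union> P" "Ed y \<inter> P = {}" unfolding U_def P_def by auto
      have "finite P" unfolding P_def using finEd by auto
      hence "card U = card (Ed y) + card P" using card_Un_disjoint[OF finEd \<open>finite P\<close> e(2)] e(1) by simp
      thus ?thesis using Ed_clique[of y] D by linarith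
    qed
    have finP: "finite P" "finite Q" unfolding P_def Q_def using finEd by auto
    have P1z: False if g: "g1 \<in> P" "g2 \<in> P" "g1 \<noteq> g2" and h: "h1 \<in> Q" "h2 \<in> Q" "h1 \<noteq> h2"
      and hv: "distinct hv" "hv!0 = x" "hv!1 = y" "1 < length hv"
      and en: "list_all2 (\<lambda>e (p,q). ends e = {hv!p, hv!q}) [g1,g2,h1,h2] en4"
      and rn: "list_all (\<lambda>(p,q). p < length hv \<and> q < length hv) en4"
      and tc: "tcheck 8 tp (replicate 8 0)"
      and ac: "adjcheck 8 ([(0,1),(0,1),(0,1),(0,1)] @ en4) tp"
    for g1 g2 h1 h2 hv en4 tp
    proof (rule config_False[of "[a1,a2,a3,a4,g1,g2,h1,h2]" hv "[(0,1),(0,1),(0,1),(0,1)] @ en4" tp "replicate 8 0"])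
      show "distinct [a1,a2,a3,a4,g1,g2,h1,h2]" using a Ae g h Pf(6)[OF g(1)] Pf(6)[OF g(2)] Qf(6)[OF h(1)] Qf(6)[OF h(2)]
        by (auto simp: P_def Q_def)
      show "set [a1,a2,a3,a4,g1,g2,h1,h2] \<subseteq> V" using a Ae Pf(1) Qf(1) g h by auto
      show "distinct hv" by fact
      show "list_all2 (\<lambda>e (p,q). ends e = {hv!p, hv!q}) [a1,a2,a3,a4,g1,g2,h1,h2] ([(0,1),(0,1),(0,1),(0,1)] @ en4)"
        using en a Ae hv by (simp add: list_all2_appendI)
      show "list_all (\<lambda>(p,q). p < length hv \<and> q < length hv) ([(0,1),(0,1),(0,1),(0,1)] @ en4)"
        using rn hv by (cases hv) auto
      show "tcheck (length [a1,a2,a3,a4,g1,g2,h1,h2]) tp (replicate 8 0)" using tc by (simp add: numeral_eq_Suc)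
      show "adjcheck (length [a1,a2,a3,a4,g1,g2,h1,h2]) ([(0,1),(0,1),(0,1),(0,1)] @ en4) tp"
        using ac by (simp add: numeral_eq_Suc)
      show "list_all2 (\<lambda>e s. s = 0 \<or> int s \<le> int \<Delta> - int (deg_in V adj e)) [a1,a2,a3,a4,g1,g2,h1,h2] (replicate 8 0)"
        by (simp add: numeral_eq_Suc)
    qed simp
    have tn: "tcheck 8 tpl_none (replicate 8 0)" using chk_none by (simp add: sl_none_def numeral_eq_Suc)
    have to: "tcheck 8 tpl_one (replicate 8 0)" using chk_one by (simp add: sl_one_def numeral_eq_Suc)
    have tt: "tcheck 8 tpl_two (replicate 8 0)" using chk_two by (simp add: sl_two_def numeral_eq_Suc)
    have an1: "adjcheck 8 [(0,1),(0,1),(0,1),(0,1),(0,2),(0,2),(1,3),(1,3)] tpl_none"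
      unfolding adjcheck_def tpl_none_def by code_simp
    have an2: "adjcheck 8 [(0,1),(0,1),(0,1),(0,1),(0,2),(0,3),(1,4),(1,4)] tpl_none"
      unfolding adjcheck_def tpl_none_def by code_simp
    have an3: "adjcheck 8 [(0,1),(0,1),(0,1),(0,1),(0,2),(0,2),(1,3),(1,4)] tpl_none"
      unfolding adjcheck_def tpl_none_def by code_simp
    have an4: "adjcheck 8 [(0,1),(0,1),(0,1),(0,1),(0,2),(0,3),(1,4),(1,5)] tpl_none"
      unfolding adjcheck_def tpl_none_def by code_simp
    have ao: "adjcheck 8 [(0,1),(0,1),(0,1),(0,1),(0,2),(0,3),(1,2),(1,4)] tpl_one"
      unfolding adjcheck_def tpl_one_def by code_simp
    have at: "adjcheck 8 [(0,1),(0,1),(0,1),(0,1),(0,2),(0,3),(1,2),(1,3)] tpl_two"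
      unfolding adjcheck_def tpl_two_def by code_simp
    show False
    proof (cases "\<forall>h1\<in>Q. \<forall>h2\<in>Q. far y h1 = far y h2")
      case True
      obtain h1 h2 where h: "h1 \<in> Q" "h2 \<in> Q" "h1 \<noteq> h2" using pick2[OF finP(2) cQ] by blast
      define w where "w = far y h1"
      have hw: "far y h = w" if "h \<in> Q" for h using True that h(1) unfolding w_def by blast
      define P' where "P' = {g \<in> P. far x g \<noteq> w}"
      have P'U: "P' \<subseteq> U" unfolding P'_def P_def U_def by auto
      have finP': "finite P'" using finP unfolding P'_def by auto
      have "card (U - P') < \<Delta>"
      proof (rule clique_lt)
        show "U - P' \<subseteq> V" using UV by auto
        fix e e' assume ee: "e \<in> U - P'" "e' \<in> U - P'" "e \<noteq> e'"
        have cls: "e \<in> Ed y \<or> (e \<in> P \<and> far x e = w)" if "e \<in> U - P'" for e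
          using that unfolding U_def P'_def P_def by auto
        show "ends e \<inter> ends e' \<noteq> {}"
        proof (cases "e \<in> Ed y \<and> e' \<in> Ed y \<or> e \<in> Ed x \<and> e' \<in> Ed x")
          case True thus ?thesis unfolding Ed_def by auto
        next
          case False
          hence "e \<in> P \<and> far x e = w \<and> e' \<in> Q \<or> e' \<in> P \<and> far x e' = w \<and> e \<in> Q"
            using cls[OF ee(1)] cls[OF ee(2)] unfolding P_def Q_def by auto
          thus ?thesis using interPQ hw by (metis inf_commute)
        qed
      qed
      hence "2 \<le> card P'" using card_Diff_subset[OF finP' P'U] D card_mono[OF finU P'U] by linarith
      then obtain g1 g2 where g: "g1 \<in> P'" "g2 \<in> P'" "g1 \<noteq> g2" using pick2[OF finP'] by blast
      have gP: "g1 \<in> P" "g2 \<in> P" "far x g1 \<noteq> w" "far x g2 \<noteq> w" using g unfolding P'_def by auto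
      show False
      proof (cases "far x g1 = far x g2")
        case True
        show False
          by (rule P1z[OF gP(1,2) g(3) h, of "[x,y,far x g1,w]" "[(0,2),(0,2),(1,3),(1,3)]" tpl_none])
            (use xy Pf[OF gP(1)] Pf[OF gP(2)] Qf[OF h(1)] Qf[OF h(2)] hw[OF h(1)] hw[OF h(2)] gP True tn an1 in auto)
      next
        case False
        show False
          by (rule P1z[OF gP(1,2) g(3) h, of "[x,y,far x g1,far x g2,w]" "[(0,2),(0,3),(1,4),(1,4)]" tpl_none])
            (use xy Pf[OF gP(1)] Pf[OF gP(2)] Qf[OF h(1)] Qf[OF h(2)] hw[OF h(1)] hw[OF h(2)] gP False tn an2 in auto)
      qed
    next
      case False
      then obtain h1 h2 where h: "h1 \<in> Q" "h2 \<in> Q" "far y h1 \<noteq> far y h2" by blast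
      have h3: "h1 \<noteq> h2" using h(3) by auto
      show False
      proof (cases "\<forall>g1\<in>P. \<forall>g2\<in>P. far x g1 = far x g2")
        case True
        obtain g1 g2 where g: "g1 \<in> P" "g2 \<in> P" "g1 \<noteq> g2" using pick2[OF finP(1) cP] by blast
        define z where "z = far x g1"
        have gz: "far x g = z" if "g \<in> P" for g using True that g(1) unfolding z_def by blast
        define Q' where "Q' = {h \<in> Q. far y h \<noteq> z}"
        have Q'U: "Q' \<subseteq> U" unfolding Q'_def Q_def U_def by auto
        have finQ': "finite Q'" using finP unfolding Q'_def by auto
        have "card (U - Q') < \<Delta>"
        proof (rule clique_lt)
          show "U - Q' \<subseteq> V" using UV by auto
          fix e e' assume ee: "e \<in> U - Q'" "e' \<in> U - Q'" "e \<noteq> e'"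
          have cls: "e \<in> Ed x \<or> (e \<in> Q \<and> far y e = z)" if "e \<in> U - Q'" for e
            using that unfolding U_def Q'_def Q_def by auto
          show "ends e \<inter> ends e' \<noteq> {}"
          proof (cases "e \<in> Ed y \<and> e' \<in> Ed y \<or> e \<in> Ed x \<and> e' \<in> Ed x")
            case True thus ?thesis unfolding Ed_def by auto
          next
            case False
            hence "e \<in> Q \<and> far y e = z \<and> e' \<in> P \<or> e' \<in> Q \<and> far y e' = z \<and> e \<in> P"
              using cls[OF ee(1)] cls[OF ee(2)] unfolding P_def Q_def by auto
            thus ?thesis using interPQ gz by (metis inf_commute)
          qed
        qed
        hence "2 \<le> card Q'" using card_Diff_subset[OF finQ' Q'U] D card_mono[OF finU Q'U] by linarith
        then obtain k1 k2 where k: "k1 \<in> Q'" "k2 \<in> Q'" "k1 \<noteq> k2" using pick2[OF finQ'] by blast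
        have kQ: "k1 \<in> Q" "k2 \<in> Q" "far y k1 \<noteq> z" "far y k2 \<noteq> z" using k unfolding Q'_def by auto
        show False
        proof (cases "far y k1 = far y k2")
          case True
          show False
            by (rule P1z[OF g kQ(1,2) k(3), of "[x,y,z,far y k1]" "[(0,2),(0,2),(1,3),(1,3)]" tpl_none])
              (use xy Pf[OF g(1)] Pf[OF g(2)] Qf[OF kQ(1)] Qf[OF kQ(2)] gz[OF g(1)] gz[OF g(2)] kQ True tn an1 in auto)
        next
          case False
          show False
            by (rule P1z[OF g kQ(1,2) k(3), of "[x,y,z,far y k1,far y k2]" "[(0,2),(0,2),(1,3),(1,4)]" tpl_none])
              (use xy Pf[OF g(1)] Pf[OF g(2)] Qf[OF kQ(1)] Qf[OF kQ(2)] gz[OF g(1)] gz[OF g(2)] kQ False tn an3 in auto)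
        qed
      next
        case False
        then obtain g1 g2 where g: "g1 \<in> P" "g2 \<in> P" "far x g1 \<noteq> far x g2" by blast
        have g3: "g1 \<noteq> g2" using g(3) by auto
        note F = xy Pf[OF g(1)] Pf[OF g(2)] Qf[OF h(1)] Qf[OF h(2)] g(3) h(3)
        show False
        proof (cases "far x g1 = far y h1")
          case c11: True
          show False
          proof (cases "far x g2 = far y h2")
            case True
            show False
              by (rule P1z[OF g(1,2) g3 h(1,2) h3, of "[x,y,far x g1,far x g2]" "[(0,2),(0,3),(1,2),(1,3)]" tpl_two])
                (use F c11 True tt at in auto)
          next
            case False
            show False
              by (rule P1z[OF g(1,2) g3 h(1,2) h3, of "[x,y,far x g1,far x g2,far y h2]" "[(0,2),(0,3),(1,2),(1,4)]" tpl_one])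
                (use F c11 False to ao in auto)
          qed
        next
          case n11: False
          show False
          proof (cases "far x g1 = far y h2")
            case c12: True
            show False
            proof (cases "far x g2 = far y h1")
              case True
              show False
                by (rule P1z[OF g(1,2) g3 h(2,1) h3[symmetric], of "[x,y,far x g1,far x g2]" "[(0,2),(0,3),(1,2),(1,3)]" tpl_two])
                  (use F c12 True tt at in auto)
            next
              case False
              show False
                by (rule P1z[OF g(1,2) g3 h(2,1) h3[symmetric], of "[x,y,far x g1,far x g2,far y h1]" "[(0,2),(0,3),(1,2),(1,4)]" tpl_one])
                  (use F c12 False to ao in auto)
            qed
          next
            case n12: False
            show False
            proof (cases "far x g2 = far y h1")
              case True
              show False
                by (rule P1z[OF g(2,1) g3[symmetric] h(1,2) h3, of "[x,y,far x g2,far x g1,far y h2]" "[(0,2),(0,3),(1,2),(1,4)]" tpl_one])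
                  (use F n11 n12 True to ao in auto)
            next
              case n21: False
              show False
              proof (cases "far x g2 = far y h2")
                case True
                show False
                  by (rule P1z[OF g(2,1) g3[symmetric] h(2,1) h3[symmetric], of "[x,y,far x g2,far x g1,far y h1]" "[(0,2),(0,3),(1,2),(1,4)]" tpl_one])
                    (use F n11 n12 n21 True to ao in auto)
              next
                case False
                show False
                  by (rule P1z[OF g(1,2) g3 h(1,2) h3, of "[x,y,far x g1,far x g2,far y h1,far y h2]" "[(0,2),(0,3),(1,4),(1,5)]" tpl_none])
                    (use F n11 n12 n21 False tn an4 in auto)
              qed
            qed
          qed
        qed
      qed
    qed
  qed
qed

lemma part2:
  assumes m3: "multiplicity V ends x y = 3" and mz1: "1 \<le> multiplicity V ends x z"
    and mz2: "1 \<le> multiplicity V ends y z"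
  shows False
proof -
  have xy: "x \<noteq> y" using m3 mult_self by auto
  have zx: "z \<noteq> x" using mz1 mult_self by auto
  have zy: "z \<noteq> y" using mz2 mult_self by auto
  define A where "A = {e \<in> V. ends e = {x,y}}"
  define U where "U = Ed x \<union> Ed y"
  define P where "P = Ed x - Ed y"
  define Q where "Q = Ed y - Ed x"
  define T where "T = {e \<in> V. ends e = {x,y} \<or> ends e = {x,z} \<or> ends e = {y,z}}"
  have finA: "finite A" unfolding A_def using finV by auto
  have cA: "3 \<le> card A" using m3 unfolding A_def multiplicity_def by simp
  obtain a1 a2 a3 where a: "a1 \<in> A" "a2 \<in> A" "a3 \<in> A" "distinct [a1,a2,a3]"
    using pick3[OF finA cA] by blast
  have Ae: "e \<in> V" "ends e = {x,y}" "e \<in> Ed x" "e \<in> Ed y" if "e \<in> A" for e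
    using that unfolding A_def Ed_def by auto
  have "{e \<in> V. ends e = {x,z}} \<noteq> {}" using mz1 unfolding multiplicity_def by (metis card.empty not_one_le_zero)
  then obtain gz where gz: "gz \<in> V" "ends gz = {x,z}" by blast
  have "{e \<in> V. ends e = {y,z}} \<noteq> {}" using mz2 unfolding multiplicity_def by (metis card.empty not_one_le_zero)
  then obtain hz where hz: "hz \<in> V" "ends hz = {y,z}" by blast
  have finU: "finite U" unfolding U_def using finEd by auto
  have degA: "deg_in V adj e = card U - 1" if "e \<in> A" for e
    using deg_U[OF Ae(1,2)[OF that]] U_def by simp
  have cU: "0 < card U" using finU Ae(3)[OF a(1)] U_def card_gt_0_iff by blast
  have D1: "\<Delta> \<le> card U" using deg_ge[OF Ae(1)[OF a(1)]] degA[OF a(1)] cU by simp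
  have D0: "card U - 1 \<le> \<Delta>" using deg_le[OF Ae(1)[OF a(1)]] degA[OF a(1)] by simp
  have UV: "U \<subseteq> V" unfolding U_def Ed_def by auto
  have TU: "T \<subseteq> U" unfolding T_def U_def Ed_def by auto
  have finT: "finite T" using finU TU finite_subset by blast
  have cT: "card T < \<Delta>"
  proof (rule clique_lt)
    show "T \<subseteq> V" unfolding T_def by auto
    fix e e' assume "e \<in> T" "e' \<in> T" "e \<noteq> e'"
    thus "ends e \<inter> ends e' \<noteq> {}" unfolding T_def by auto
  qed
  have gzT: "gz \<in> T" "hz \<in> T" using gz hz unfolding T_def by auto
  have ne: "ends gz \<noteq> {x,y}" "ends hz \<noteq> {x,y}" "ends gz \<noteq> ends hz"
    using gz hz xy zx zy by (auto simp: doubleton_eq_iff)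
  have Xf: "e \<in> V" "ends e = {x, far x e}" "far x e \<noteq> x" "far x e \<noteq> y" "far x e \<noteq> z" if "e \<in> Ed x - T" for e
  proof -
    show eV: "e \<in> V" "ends e = {x, far x e}" "far x e \<noteq> x" using that far[of e x] unfolding Ed_def by auto
    show "far x e \<noteq> y" "far x e \<noteq> z" using that eV unfolding T_def by auto
  qed
  have Yf: "e \<in> V" "ends e = {y, far y e}" "far y e \<noteq> y" "far y e \<noteq> x" "far y e \<noteq> z" if "e \<in> Ed y - T" for e
  proof -
    show eV: "e \<in> V" "ends e = {y, far y e}" "far y e \<noteq> y" using that far[of e y] unfolding Ed_def by auto
    show "far y e \<noteq> x" "far y e \<noteq> z" using that eV unfolding T_def by (auto simp: insert_commute)
  qed
  show False
  proof (cases "\<Delta> = card U")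
    case True
    have sl: "int 1 \<le> int \<Delta> - int (deg_in V adj e)" if "e \<in> A" for e
      using degA[OF that] True cU by simp
    have "card T < card U" using cT True by simp
    then obtain e where e: "e \<in> U" "e \<notin> T" using TU by (metis psubsetI psubset_card_mono finU subsetI order.asym card_mono)
    show False
    proof (cases "e \<in> Ed x")
      case True
      hence eX: "e \<in> Ed x - T" using e by auto
      show False
      proof (rule config_False[of "[a1,a2,a3,gz,hz,e]" "[x,y,z,far x e]"
          "[(0,1),(0,1),(0,1),(0,2),(1,2),(0,3)]" tpl_s1 sl_s1])
        show "distinct [a1,a2,a3,gz,hz,e]" using a Ae ne gzT e(2) Xf[OF eX] by (auto simp: doubleton_eq_iff)
        show "set [a1,a2,a3,gz,hz,e] \<subseteq> V" using a Ae gz hz Xf(1)[OF eX] by auto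
        show "distinct [x,y,z,far x e]" using xy zx zy Xf[OF eX] by auto
        show "list_all2 (\<lambda>d (p,q). ends d = {[x,y,z,far x e]!p, [x,y,z,far x e]!q})
            [a1,a2,a3,gz,hz,e] [(0,1),(0,1),(0,1),(0,2),(1,2),(0,3)]"
          using a Ae gz hz Xf[OF eX] by simp
        show "list_all (\<lambda>(p,q). p < length [x,y,z,far x e] \<and> q < length [x,y,z,far x e])
            [(0,1),(0,1),(0,1),(0,2),(1,2),(0,3)]" by simp
        show "tcheck (length [a1,a2,a3,gz,hz,e]) tpl_s1 sl_s1" using chk_s1 by (simp add: numeral_eq_Suc)
        show "adjcheck (length [a1,a2,a3,gz,hz,e]) [(0,1),(0,1),(0,1),(0,2),(1,2),(0,3)] tpl_s1"
          unfolding adjcheck_def tpl_s1_def by code_simp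
        show "list_all2 (\<lambda>d s. s = 0 \<or> int s \<le> int \<Delta> - int (deg_in V adj d)) [a1,a2,a3,gz,hz,e] sl_s1"
          unfolding sl_s1_def using sl a by simp
      qed simp
    next
      case False
      hence eY: "e \<in> Ed y - T" using e unfolding U_def by auto
      show False
      proof (rule config_False[of "[a1,a2,a3,hz,gz,e]" "[x,y,z,far y e]"
          "[(0,1),(0,1),(0,1),(1,2),(0,2),(1,3)]" tpl_s1 sl_s1])
        show "distinct [a1,a2,a3,hz,gz,e]" using a Ae ne gzT e(2) Yf[OF eY] by (auto simp: doubleton_eq_iff)
        show "set [a1,a2,a3,hz,gz,e] \<subseteq> V" using a Ae gz hz Yf(1)[OF eY] by auto
        show "distinct [x,y,z,far y e]" using xy zx zy Yf[OF eY] by auto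
        show "list_all2 (\<lambda>d (p,q). ends d = {[x,y,z,far y e]!p, [x,y,z,far y e]!q})
            [a1,a2,a3,hz,gz,e] [(0,1),(0,1),(0,1),(1,2),(0,2),(1,3)]"
          using a Ae gz hz Yf[OF eY] by simp
        show "list_all (\<lambda>(p,q). p < length [x,y,z,far y e] \<and> q < length [x,y,z,far y e])
            [(0,1),(0,1),(0,1),(1,2),(0,2),(1,3)]" by simp
        show "tcheck (length [a1,a2,a3,hz,gz,e]) tpl_s1 sl_s1" using chk_s1 by (simp add: numeral_eq_Suc)
        show "adjcheck (length [a1,a2,a3,hz,gz,e]) [(0,1),(0,1),(0,1),(1,2),(0,2),(1,3)] tpl_s1"
          unfolding adjcheck_def tpl_s1_def by code_simp
        show "list_all2 (\<lambda>d s. s = 0 \<or> int s \<le> int \<Delta> - int (deg_in V adj d)) [a1,a2,a3,hz,gz,e] sl_s1"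
          unfolding sl_s1_def using sl a by simp
      qed simp
    qed
  next
    case False
    hence D: "\<Delta> + 1 = card U" using D0 D1 by linarith
    have finP: "finite P" "finite Q" unfolding P_def Q_def using finEd by auto
    have cQ: "2 \<le> card Q"
    proof -
      have e: "U = Ed x \<union> Q" "Ed x \<inter> Q = {}" unfolding U_def Q_def by auto
      hence "card U = card (Ed x) + card Q" using card_Un_disjoint[OF finEd finP(2) e(2)] e(1) by simp
      thus ?thesis using Ed_clique[of x] D by linarith
    qed
    have cP: "2 \<le> card P"
    proof -
      have e: "U = Ed y \<union> P" "Ed y \<inter> P = {}" unfolding U_def P_def by auto
      hence "card U = card (Ed y) + card P" using card_Un_disjoint[OF finEd finP(1) e(2)] e(1) by simp
      thus ?thesis using Ed_clique[of y] D by linarith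
    qed
    have cUT: "2 \<le> card (U - T)" using card_Diff_subset[OF finT TU] cT D card_mono[OF finU TU] by linarith
    have finUT: "finite (U - T)" using finU by auto
    have P2z: False if r: "distinct rest" "set rest \<subseteq> V" "\<forall>e\<in>set rest. ends e \<noteq> {x,y}"
      and hv: "distinct hv" "hv!0 = x" "hv!1 = y" "1 < length hv"
      and en: "list_all2 (\<lambda>e (p,q). ends e = {hv!p, hv!q}) rest en"
      and rn: "list_all (\<lambda>(p,q). p < length hv \<and> q < length hv) en"
      and tc: "tcheck (3 + length rest) tp (replicate (3 + length rest) 0)"
      and ac: "adjcheck (3 + length rest) ([(0,1),(0,1),(0,1)] @ en) tp"
    for rest hv en tp
    proof (rule config_False[of "[a1,a2,a3] @ rest" hv "[(0,1),(0,1),(0,1)] @ en" tp "replicate (3 + length rest) 0"])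
      have "a \<notin> set rest" if "a \<in> A" for a using r(3) Ae(2)[OF that] by auto
      thus "distinct ([a1,a2,a3] @ rest)" using a r(1) by auto
      show "set ([a1,a2,a3] @ rest) \<subseteq> V" using a Ae r(2) by auto
      show "distinct hv" by fact
      show "list_all2 (\<lambda>e (p,q). ends e = {hv!p, hv!q}) ([a1,a2,a3] @ rest) ([(0,1),(0,1),(0,1)] @ en)"
        using en a Ae hv by (simp add: list_all2_appendI)
      show "list_all (\<lambda>(p,q). p < length hv \<and> q < length hv) ([(0,1),(0,1),(0,1)] @ en)"
        using rn hv by (cases hv) auto
      have L: "length ([a1,a2,a3] @ rest) = 3 + length rest" by simp
      show "tcheck (length ([a1,a2,a3] @ rest)) tp (replicate (3 + length rest) 0)" unfolding L by (rule tc)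
      show "adjcheck (length ([a1,a2,a3] @ rest)) ([(0,1),(0,1),(0,1)] @ en) tp" unfolding L by (rule ac)
      show "list_all2 (\<lambda>e s. s = 0 \<or> int s \<le> int \<Delta> - int (deg_in V adj e)) ([a1,a2,a3] @ rest) (replicate (3 + length rest) 0)"
        by (simp add: list_all2_conv_all_nth)
    qed simp
    have tn: "tcheck 8 tpl_none (replicate 8 0)" using chk_none by (simp add: sl_none_def numeral_eq_Suc)
    have txy: "tcheck 7 tpl_xy (replicate 7 0)" using chk_xy by (simp add: sl_xy_def numeral_eq_Suc)
    have txyt: "tcheck 7 tpl_xyt (replicate 7 0)" using chk_xyt by (simp add: sl_xyt_def numeral_eq_Suc)
    have a_xy: "adjcheck 7 [(0,1),(0,1),(0,1),(0,2),(1,2),(0,3),(1,4)] tpl_xy"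
      unfolding adjcheck_def tpl_xy_def by code_simp
    have a_xyt: "adjcheck 7 [(0,1),(0,1),(0,1),(0,2),(1,2),(0,3),(1,3)] tpl_xyt"
      unfolding adjcheck_def tpl_xyt_def by code_simp
    have an1: "adjcheck 8 [(0,1),(0,1),(0,1),(0,2),(1,2),(1,2),(0,3),(0,3)] tpl_none"
      unfolding adjcheck_def tpl_none_def by code_simp
    have an2: "adjcheck 8 [(0,1),(0,1),(0,1),(0,2),(1,2),(1,2),(0,3),(0,4)] tpl_none"
      unfolding adjcheck_def tpl_none_def by code_simp
    have an3: "adjcheck 8 [(0,1),(0,1),(0,1),(1,2),(0,2),(0,2),(1,3),(1,3)] tpl_none"
      unfolding adjcheck_def tpl_none_def by code_simp
    have an4: "adjcheck 8 [(0,1),(0,1),(0,1),(1,2),(0,2),(0,2),(1,3),(1,4)] tpl_none"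
      unfolding adjcheck_def tpl_none_def by code_simp
    show False
    proof (cases "Ed x - T \<noteq> {} \<and> Ed y - T \<noteq> {}")
      case True
      then obtain g h where g: "g \<in> Ed x - T" and h: "h \<in> Ed y - T" by blast
      note F = xy zx zy Xf[OF g] Yf[OF h] gz hz ne
      have gh: "g \<noteq> h" using F by (auto simp: doubleton_eq_iff)
      have dr: "distinct [gz,hz,g,h]" using F gzT g h gh by auto
      show False
      proof (cases "far x g = far y h")
        case True
        show False
          by (rule P2z[of "[gz,hz,g,h]" "[x,y,z,far x g]" "[(0,2),(1,2),(0,3),(1,3)]" tpl_xyt])
            (use F dr True txyt a_xyt in \<open>auto simp: doubleton_eq_iff numeral_eq_Suc\<close>)
      next
        case False
        show False
          by (rule P2z[of "[gz,hz,g,h]" "[x,y,z,far x g,far y h]" "[(0,2),(1,2),(0,3),(1,4)]" tpl_xy])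
            (use F dr False txy a_xy in \<open>auto simp: doubleton_eq_iff numeral_eq_Suc\<close>)
      qed
    next
      case False
      show False
      proof (cases "Ed y - T = {}")
        case True
        have UT: "U - T = Ed x - T" using True unfolding U_def by auto
        obtain g1 g2 where g: "g1 \<in> Ed x - T" "g2 \<in> Ed x - T" "g1 \<noteq> g2"
          using pick2[OF finUT cUT] UT by auto
        have Qz: "ends h = {y,z}" "h \<in> V" if "h \<in> Q" for h
        proof -
          have "h \<in> T" "x \<notin> ends h" using that True unfolding Q_def Ed_def by auto
          thus "ends h = {y,z}" "h \<in> V" unfolding T_def by auto
        qed
        obtain h1 h2 where h: "h1 \<in> Q" "h2 \<in> Q" "h1 \<noteq> h2" using pick2[OF finP(2) cQ] by blast
        note F = xy zx zy Xf[OF g(1)] Xf[OF g(2)] gz hz ne Qz[OF h(1)] Qz[OF h(2)]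
        have dr: "distinct [gz,h1,h2,g1,g2]" using F h g gzT by (auto simp: doubleton_eq_iff)
        show False
        proof (cases "far x g1 = far x g2")
          case True
          show False
            by (rule P2z[of "[gz,h1,h2,g1,g2]" "[x,y,z,far x g1]" "[(0,2),(1,2),(1,2),(0,3),(0,3)]" tpl_none])
              (use F dr True tn an1 in \<open>auto simp: doubleton_eq_iff numeral_eq_Suc\<close>)
        next
          case False
          show False
            by (rule P2z[of "[gz,h1,h2,g1,g2]" "[x,y,z,far x g1,far x g2]" "[(0,2),(1,2),(1,2),(0,3),(0,4)]" tpl_none])
              (use F dr False tn an2 in \<open>auto simp: doubleton_eq_iff numeral_eq_Suc\<close>)
        qed
      next
        case nY: False
        hence X0: "Ed x - T = {}" using False by auto
        have UT: "U - T = Ed y - T" using X0 unfolding U_def by auto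
        obtain h1 h2 where h: "h1 \<in> Ed y - T" "h2 \<in> Ed y - T" "h1 \<noteq> h2"
          using pick2[OF finUT cUT] UT by auto
        have Pz: "ends g = {x,z}" "g \<in> V" if "g \<in> P" for g
        proof -
          have "g \<in> T" "y \<notin> ends g" using that X0 unfolding P_def Ed_def by auto
          thus "ends g = {x,z}" "g \<in> V" unfolding T_def by auto
        qed
        obtain g1 g2 where g: "g1 \<in> P" "g2 \<in> P" "g1 \<noteq> g2" using pick2[OF finP(1) cP] by blast
        note F = xy zx zy Yf[OF h(1)] Yf[OF h(2)] gz hz ne Pz[OF g(1)] Pz[OF g(2)]
        have gT: "g1 \<in> T" "g2 \<in> T" using Pz[OF g(1)] Pz[OF g(2)] unfolding T_def by auto
        have hzg: "hz \<noteq> g1" "hz \<noteq> g2" using g hz unfolding P_def Ed_def by auto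
        have dr: "distinct [hz,g1,g2,h1,h2]" using gT hzg h g gzT by auto
        show False
        proof (cases "far y h1 = far y h2")
          case True
          show False
            by (rule P2z[of "[hz,g1,g2,h1,h2]" "[x,y,z,far y h1]" "[(1,2),(0,2),(0,2),(1,3),(1,3)]" tpl_none])
              (use F dr True tn an3 in \<open>auto simp: doubleton_eq_iff numeral_eq_Suc insert_commute\<close>)
        next
          case False
          show False
            by (rule P2z[of "[hz,g1,g2,h1,h2]" "[x,y,z,far y h1,far y h2]" "[(1,2),(0,2),(0,2),(1,3),(1,4)]" tpl_none])
              (use F dr False tn an4 in \<open>auto simp: doubleton_eq_iff numeral_eq_Suc insert_commute\<close>)
        qed
      qed
    qed
  qed
qed

end

theorem mainTheorem11:
  fixes V :: "'v set" and adj :: "'v \<Rightarrow> 'v \<Rightarrow> bool" and ends :: "'v \<Rightarrow> 'x set"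
  assumes "simple_graph V adj"
    and "BK_free V adj"
    and "clique_number V adj < max_degree V adj"
    and "line_graph_of V adj ends"
  shows "(\<forall>x y. multiplicity V ends x y \<le> 3) \<and>
         (\<forall>x1 x2. multiplicity V ends x1 x2 = 3 \<longrightarrow>
            \<not> (\<exists>x3. multiplicity V ends x1 x3 \<ge> 1 \<and> multiplicity V ends x2 x3 \<ge> 1))"
proof -
  interpret LG V adj ends using assms by unfold_locales
  show ?thesis
  proof (intro conjI allI impI notI)
    fix x y
    show "multiplicity V ends x y \<le> 3"
    proof (cases "x = y")
      case True thus ?thesis using mult_self by simp
    next
      case False
      show ?thesis
      proof (rule ccontr)
        assume "\<not> multiplicity V ends x y \<le> 3"
        hence "4 \<le> multiplicity V ends x y" by simp
        thus False using part1[OF False] by blast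
      qed
    qed
  next
    fix x1 x2
    assume m: "multiplicity V ends x1 x2 = 3"
      and "\<exists>x3. 1 \<le> multiplicity V ends x1 x3 \<and> 1 \<le> multiplicity V ends x2 x3"
    then obtain x3 where "1 \<le> multiplicity V ends x1 x3" "1 \<le> multiplicity V ends x2 x3" by blast
    thus False using part2[OF m] by blast
  qed
qed

end
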